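(* Let $S$ be a numerical semigroup, let $\Lambda\subseteq\mathrm{IBetti}(S)$ be nonempty and let $b\in\mathrm{IBetti}(S)\setminus\Lambda$. For $s\in S$ let $q_s$ be the largest integer with $q_sb\le_S s$. Then for every $s\in S$ $$\mathrm B(s;\Lambda\cup\{b\})=\bigcup_{j=0}^{q_s}\Big(\mathrm B(s-jb;\Lambda)+\underbrace{\mathrm I(b)+\cdots+\mathrm I(b)}_{j}\Big),$$ where $+$ denotes Minkowski sum of subsets of $\mathbb N^e$ (the $j=0$ term being $\mathrm B(s;\Lambda)$). In particular, $$|\mathrm B(s;\Lambda\cup\{b\})|\le\sum_{j=0}^{q_s}|\mathrm B(s-jb;\Lambda)|\binom{\mathrm i(b)+j-1}{j}.$$
   Context: A numerical semigroup $S$ is a submonoid of $(\mathbb N,+)$ with finite complement, minimally generated by $\{n_1,\dots,n_e\}$. Write $a\le_S b$ if $b-a\in S$. Let $\varphi:\mathbb N^e\to S$, $\varphi(a)=\sum_ia_in_i$; $\mathrm Z(s)=\varphi^{-1}(s)$. $\nabla_s$ is the graph on $\mathrm Z(s)$ with distinct $x,y$ adjacent iff $x\cdot y\ne0$; $s$ is a Betti element if $\nabla_s$ is disconnected. A factorization $z\in\mathrm Z(s)$ is isolated if $z\cdot x=0$ for all $x\in\mathrm Z(s)\setminus\{z\}$; $\mathrm I(t)$ is the set of isolated factorizations of $t$, $\mathrm i(t)=|\mathrm I(t)|$, and $\mathrm I(\Lambda)=\bigcup_{t\in\Lambda}\mathrm I(t)$. $\mathrm I_s(S)$ is the set of $z\in\mathbb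 N^e$ such that $\varphi(z)$ has exactly one factorization. $\mathrm{IBetti}(S)$ is the set of Betti elements $b$ with $\mathrm I(b)\ne\emptyset$. For $\Lambda\subseteq S$ and $s\in S$, $\mathrm B(s;\Lambda)=\{w+x_1+\cdots+x_l\in\mathrm Z(s): w\in\mathrm I_s(S),\ l\ge0,\ x_1,\dots,x_l\in\mathrm I(\Lambda)\}$. *)

theory Defs
  imports Main "HOL-Library.Function_Algebras"
begin

text \<open>Elements of N^e are modelled as functions nat => nat vanishing from index e on;
  addition of such vectors is pointwise (Function_Algebras).\<close>

definition vecs :: "nat \<Rightarrow> (nat \<Rightarrow> nat) set" where
  "vecs e = {z. \<forall>i\<ge>e. z i = 0}"

definition phi :: "(nat \<Rightarrow> nat) \<Rightarrow> nat \<Rightarrow> (nat \<Rightarrow> nat) \<Rightarrow> nat" where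
  "phi n e z = (\<Sum>i<e. z i * n i)"

definition sgrp :: "(nat \<Rightarrow> nat) \<Rightarrow> nat \<Rightarrow> nat set" where
  "sgrp n e = phi n e ` vecs e"

definition num_sgrp_min_gens :: "(nat \<Rightarrow> nat) \<Rightarrow> nat \<Rightarrow> bool" where
  "num_sgrp_min_gens n e \<longleftrightarrow> e \<ge> 1 \<and> finite (- sgrp n e) \<and>
     (\<forall>i<e. n i \<notin> phi n e ` {z \<in> vecs e. z i = 0})"

definition leS :: "(nat \<Rightarrow> nat) \<Rightarrow> nat \<Rightarrow> nat \<Rightarrow> nat \<Rightarrow> bool" where
  "leS n e a b \<longleftrightarrow> a \<le> b \<and> b - a \<in> sgrp n e"

definition Zf :: "(nat \<Rightarrow> nat) \<Rightarrow> nat \<Rightarrow> nat \<Rightarrow> (nat \<Rightarrow> nat) set" where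
  "Zf n e s = {z \<in> vecs e. phi n e z = s}"

definition dot :: "nat \<Rightarrow> (nat \<Rightarrow> nat) \<Rightarrow> (nat \<Rightarrow> nat) \<Rightarrow> nat" where
  "dot e x y = (\<Sum>i<e. x i * y i)"

definition nabla_edges :: "(nat \<Rightarrow> nat) \<Rightarrow> nat \<Rightarrow> nat \<Rightarrow> ((nat \<Rightarrow> nat) \<times> (nat \<Rightarrow> nat)) set" where
  "nabla_edges n e s = {(x, y). x \<in> Zf n e s \<and> y \<in> Zf n e s \<and> x \<noteq> y \<and> dot e x y \<noteq> 0}"

definition is_betti :: "(nat \<Rightarrow> nat) \<Rightarrow> nat \<Rightarrow> nat \<Rightarrow> bool" where
  "is_betti n e s \<longleftrightarrow> s \<in> sgrp n e \<and>
     (\<exists>x\<in>Zf n e s. \<exists>y\<in>Zf n e s. (x, y) \<notin> (nabla_edges n e s)\<^sup>*)"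

definition Iso :: "(nat \<Rightarrow> nat) \<Rightarrow> nat \<Rightarrow> nat \<Rightarrow> (nat \<Rightarrow> nat) set" where
  "Iso n e t = {z \<in> Zf n e t. \<forall>x \<in> Zf n e t - {z}. dot e z x = 0}"

definition iso_num :: "(nat \<Rightarrow> nat) \<Rightarrow> nat \<Rightarrow> nat \<Rightarrow> nat" where
  "iso_num n e t = card (Iso n e t)"

definition IsoSet :: "(nat \<Rightarrow> nat) \<Rightarrow> nat \<Rightarrow> nat set \<Rightarrow> (nat \<Rightarrow> nat) set" where
  "IsoSet n e \<Lambda> = (\<Union>t\<in>\<Lambda>. Iso n e t)"

definition Is :: "(nat \<Rightarrow> nat) \<Rightarrow> nat \<Rightarrow> (nat \<Rightarrow> nat) set" where
  "Is n e = {z \<in> vecs e. card (Zf n e (phi n e z)) = 1}"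

definition IBetti :: "(nat \<Rightarrow> nat) \<Rightarrow> nat \<Rightarrow> nat set" where
  "IBetti n e = {b. is_betti n e b \<and> Iso n e b \<noteq> {}}"

definition Bset :: "(nat \<Rightarrow> nat) \<Rightarrow> nat \<Rightarrow> nat \<Rightarrow> nat set \<Rightarrow> (nat \<Rightarrow> nat) set" where
  "Bset n e s \<Lambda> = {v \<in> Zf n e s. \<exists>w \<in> Is n e. \<exists>xs. set xs \<subseteq> IsoSet n e \<Lambda> \<and> v = w + sum_list xs}"

definition mink :: "(nat \<Rightarrow> nat) set \<Rightarrow> (nat \<Rightarrow> nat) set \<Rightarrow> (nat \<Rightarrow> nat) set" where
  "mink A B = {a + b | a b. a \<in> A \<and> b \<in> B}"

fun mpow :: "(nat \<Rightarrow> nat) set \<Rightarrow> nat \<Rightarrow> (nat \<Rightarrow> nat) set" where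
  "mpow A 0 = {0}"
| "mpow A (Suc j) = mink A (mpow A j)"

definition qS :: "(nat \<Rightarrow> nat) \<Rightarrow> nat \<Rightarrow> nat \<Rightarrow> nat \<Rightarrow> nat" where
  "qS n e b s = (GREATEST q. leS n e (q * b) s)"

end

theory Submission
  imports Defs "HOL-Library.Multiset"
begin

lemma phi_add: "phi n e (x + y) = phi n e x + phi n e y"
  by (simp add: phi_def sum.distrib algebra_simps)

lemma phi_zero: "phi n e 0 = 0"
  by (simp add: phi_def)

lemma phi_sum_list: "phi n e (sum_list xs) = sum_list (map (phi n e) xs)"
  by (induct xs) (simp_all only: sum_list.Nil sum_list.Cons list.map phi_add phi_zero)

lemma vecs_add: "x \<in> vecs e \<Longrightarrow> y \<in> vecs e \<Longrightarrow> x + y \<in> vecs e"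
  by (simp add: vecs_def)

lemma vecs_sum_list: "set xs \<subseteq> vecs e \<Longrightarrow> sum_list xs \<in> vecs e"
  by (induct xs) (auto simp: vecs_def)

lemma Iso_sub: "Iso n e t \<subseteq> Zf n e t"
  by (auto simp: Iso_def)

lemma Zf_sub: "Zf n e t \<subseteq> vecs e"
  by (auto simp: Zf_def)

lemma sum_list_split:
  "sum_list (filter (\<lambda>x. \<not> P x) xs) + sum_list (filter P xs) = (sum_list xs :: 'a::comm_monoid_add)"
  by (induct xs) (auto simp: add_ac)

lemma sum_list_const: "(\<forall>x\<in>set xs. f x = (b::nat)) \<Longrightarrow> sum_list (map f xs) = length xs * b"
  by (induct xs) auto

lemma mpow_sum_list: "set ys \<subseteq> I \<Longrightarrow> sum_list ys \<in> mpow I (length ys)"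
  by (induct ys) (auto simp: mink_def)

lemma mpow_elim: "c \<in> mpow I j \<Longrightarrow> \<exists>ys. set ys \<subseteq> I \<and> length ys = j \<and> c = sum_list ys"
proof (induct j arbitrary: c)
  case 0 then show ?case by auto
next
  case (Suc j)
  then obtain a d where "a \<in> I" "d \<in> mpow I j" "c = a + d" by (auto simp: mink_def)
  with Suc(1)[of d] obtain ys where "set ys \<subseteq> I" "length ys = j" "d = sum_list ys" by auto
  then show ?case using \<open>a \<in> I\<close> \<open>c = a + d\<close> by (intro exI[of _ "a # ys"]) auto
qed

lemma mink_card: "card (mink A B) \<le> card A * card B"
proof (cases "A = {} \<or> B = {}")
  case True then show ?thesis by (auto simp: mink_def)
next
  case False
  then obtain a0 b0 where ab: "a0 \<in> A" "b0 \<in> B" by auto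
  show ?thesis
  proof (cases "finite A \<and> finite B")
    case True
    have "mink A B = (\<lambda>(a,b). a + b) ` (A \<times> B)" by (auto simp: mink_def)
    moreover have "card ((\<lambda>(a,b). a + b) ` (A \<times> B)) \<le> card (A \<times> B)"
      by (rule card_image_le) (simp add: True)
    ultimately have "card (mink A B) \<le> card (A \<times> B)" by simp
    then show ?thesis by (simp add: card_cartesian_product)
  next
    case False
    have "infinite (mink A B)"
    proof
      assume fin: "finite (mink A B)"
      have "(\<lambda>a. a + b0) ` A \<subseteq> mink A B" using ab by (auto simp: mink_def)
      moreover have "(\<lambda>b. a0 + b) ` B \<subseteq> mink A B" using ab by (auto simp: mink_def)
      moreover have "inj (\<lambda>a::nat\<Rightarrow>nat. a + b0)" by (auto simp: inj_def fun_eq_iff)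
      moreover have "inj (\<lambda>b::nat\<Rightarrow>nat. a0 + b)" by (auto simp: inj_def fun_eq_iff)
      ultimately have "finite A" "finite B" using fin
        by (meson finite_imageD finite_subset inj_on_subset subset_UNIV)+
      with False show False by simp
    qed
    then show ?thesis by simp
  qed
qed

lemma mpow_card: "card (mpow I j) \<le> (card I + j - 1) choose j"
proof (cases "finite I")
  case True
  have "mpow I j \<subseteq> sum_mset ` multisets_of_size I j"
  proof
    fix c assume "c \<in> mpow I j"
    then obtain ys where "set ys \<subseteq> I" "length ys = j" "c = sum_list ys" using mpow_elim by blast
    then show "c \<in> sum_mset ` multisets_of_size I j"
      by (intro image_eqI[of _ _ "mset ys"]) (auto simp: multisets_of_size_def sum_mset_sum_list)
  qed
  then have "card (mpow I j) \<le> card (sum_mset ` multisets_of_size I j)"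
    by (intro card_mono) (auto intro: True)
  also have "\<dots> \<le> card (multisets_of_size I j)" by (rule card_image_le) (auto intro: True)
  finally show ?thesis using card_multisets_of_size[OF True] by simp
next
  case False
  show ?thesis
  proof (cases j)
    case 0 then show ?thesis by simp
  next
    case (Suc k)
    from False obtain x where x: "x \<in> I" by (metis finite.emptyI ex_in_conv)
    have "set (replicate k x) \<subseteq> I" using x by (auto simp: set_replicate_conv_if)
    from mpow_sum_list[OF this] have "sum_list (replicate k x) \<in> mpow I k" by simp
    then obtain c where c: "c \<in> mpow I k" by blast
    have "(\<lambda>a. a + c) ` I \<subseteq> mpow I j" using c Suc by (auto simp: mink_def)
    moreover have "inj (\<lambda>a::nat\<Rightarrow>nat. a + c)" by (auto simp: inj_def fun_eq_iff)
    ultimately have "infinite (mpow I j)" using False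
      by (meson finite_imageD finite_subset inj_on_subset subset_UNIV)
    then show ?thesis by simp
  qed
qed

lemma gens_pos:
  assumes "num_sgrp_min_gens n e" "i < e"
  shows "n i > 0"
proof -
  have "(0::nat\<Rightarrow>nat) \<in> {z \<in> vecs e. z i = 0}" by (simp add: vecs_def)
  then have "phi n e 0 \<in> phi n e ` {z \<in> vecs e. z i = 0}" by blast
  then have z: "0 \<in> phi n e ` {z \<in> vecs e. z i = 0}" by (simp only: phi_zero)
  have m: "n i \<notin> phi n e ` {z \<in> vecs e. z i = 0}" using assms by (simp add: num_sgrp_min_gens_def)
  show ?thesis using z m by (metis gr0I)
qed

lemma betti_pos:
  assumes "num_sgrp_min_gens n e" "is_betti n e b"
  shows "b > 0"
proof (rule ccontr)
  assume "\<not> b > 0"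
  then have b0: "b = 0" by simp
  have "Zf n e 0 \<subseteq> {0}"
  proof
    fix z assume z: "z \<in> Zf n e 0"
    have "z i = 0" for i
    proof (cases "i < e")
      case True
      from z have "(\<Sum>i<e. z i * n i) = 0" by (simp add: Zf_def phi_def)
      then have "z i * n i = 0" using True by simp
      then show ?thesis using gens_pos[OF assms(1) True] by simp
    next
      case False then show ?thesis using z by (simp add: Zf_def vecs_def)
    qed
    then show "z \<in> {0}" by (auto simp: fun_eq_iff)
  qed
  with assms(2) b0 show False by (auto simp: is_betti_def)
qed

theorem lemma5p12:
  fixes n :: "nat \<Rightarrow> nat" and e :: nat and \<Lambda> :: "nat set" and b s :: nat
  assumes "num_sgrp_min_gens n e"
    and "\<Lambda> \<subseteq> IBetti n e" and "\<Lambda> \<noteq> {}"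
    and "b \<in> IBetti n e - \<Lambda>"
    and "s \<in> sgrp n e"
  shows "Bset n e s (\<Lambda> \<union> {b}) =
           (\<Union>j\<in>{0..qS n e b s}. mink (Bset n e (s - j * b) \<Lambda>) (mpow (Iso n e b) j))
      \<and> card (Bset n e s (\<Lambda> \<union> {b})) \<le>
           (\<Sum>j=0..qS n e b s. card (Bset n e (s - j * b) \<Lambda>) * ((iso_num n e b + j - 1) choose j))"
proof -
  have bpos: "b > 0" using betti_pos[OF assms(1)] assms(4) by (auto simp: IBetti_def)
  define q where "q = qS n e b s"
  have P0: "leS n e (0 * b) s" using assms(5) by (simp add: leS_def)
  have bnd: "\<forall>y. leS n e (y * b) s \<longrightarrow> y \<le> s"
  proof (intro allI impI)
    fix y assume "leS n e (y * b) s"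
    then have "y * b \<le> s" by (simp add: leS_def)
    moreover have "y \<le> y * b" using bpos by simp
    ultimately show "y \<le> s" by linarith
  qed
  have qle: "q * b \<le> s"
    using GreatestI_nat[of "\<lambda>q. leS n e (q * b) s", OF P0 bnd[rule_format]] by (simp add: q_def qS_def leS_def)
  have leq: "leS n e (j * b) s \<Longrightarrow> j \<le> q" for j
    using Greatest_le_nat[of "\<lambda>q. leS n e (q * b) s" j s, OF _ bnd[rule_format]] by (simp add: q_def qS_def)
  have isoU: "IsoSet n e (\<Lambda> \<union> {b}) = IsoSet n e \<Lambda> \<union> Iso n e b" by (auto simp: IsoSet_def)
  have isoV: "IsoSet n e L \<subseteq> vecs e" for L using Iso_sub Zf_sub by (fastforce simp: IsoSet_def)
  have isoPhi: "x \<in> Iso n e b \<Longrightarrow> phi n e x = b" for x using Iso_sub by (fastforce simp: Zf_def)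
  have IsV: "Is n e \<subseteq> vecs e" by (auto simp: Is_def)
  have seteq: "Bset n e s (\<Lambda> \<union> {b}) =
           (\<Union>j\<in>{0..q}. mink (Bset n e (s - j * b) \<Lambda>) (mpow (Iso n e b) j))"
  proof (rule set_eqI, rule iffI)
    fix v assume "v \<in> Bset n e s (\<Lambda> \<union> {b})"
    then obtain w xs where v: "v \<in> Zf n e s" "w \<in> Is n e" "set xs \<subseteq> IsoSet n e (\<Lambda> \<union> {b})"
      "v = w + sum_list xs" by (auto simp: Bset_def)
    define P where "P = (\<lambda>x. x \<in> Iso n e b)"
    define xs1 where "xs1 = filter (\<lambda>x. \<not> P x) xs"
    define xs2 where "xs2 = filter P xs"
    define j where "j = length xs2"
    define a where "a = w + sum_list xs1"
    have vs: "v = a + sum_list xs2" using v(4) sum_list_split[of P xs]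
      by (simp add: a_def xs1_def xs2_def add.assoc)
    have s1: "set xs1 \<subseteq> IsoSet n e \<Lambda>" using v(3) isoU by (auto simp: xs1_def P_def)
    have s2: "set xs2 \<subseteq> Iso n e b" by (auto simp: xs2_def P_def)
    have ph2: "phi n e (sum_list xs2) = j * b" using s2 isoPhi
      by (simp add: phi_sum_list j_def sum_list_const subset_iff)
    have aV: "a \<in> vecs e" unfolding a_def using v(2) IsV s1 isoV
      by (intro vecs_add vecs_sum_list) auto
    have "phi n e v = s" using v(1) by (simp add: Zf_def)
    then have pa: "phi n e a + j * b = s" using vs ph2 phi_add by metis
    have "a \<in> Bset n e (s - j * b) \<Lambda>" unfolding Bset_def Zf_def
      using aV pa v(2) s1 a_def by auto
    moreover have "sum_list xs2 \<in> mpow (Iso n e b) j" using mpow_sum_list[OF s2] j_def by simp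
    moreover have "j \<le> q" using pa aV by (intro leq) (auto simp: leS_def sgrp_def)
    ultimately show "v \<in> (\<Union>j\<in>{0..q}. mink (Bset n e (s - j * b) \<Lambda>) (mpow (Iso n e b) j))"
      using vs unfolding mink_def by fastforce
  next
    fix v assume "v \<in> (\<Union>j\<in>{0..q}. mink (Bset n e (s - j * b) \<Lambda>) (mpow (Iso n e b) j))"
    then obtain j a c where jq: "j \<le> q" and a: "a \<in> Bset n e (s - j * b) \<Lambda>"
      and c: "c \<in> mpow (Iso n e b) j" and vac: "v = a + c" by (auto simp: mink_def)
    obtain ys where ys: "set ys \<subseteq> Iso n e b" "length ys = j" "c = sum_list ys"
      using mpow_elim[OF c] by blast
    obtain w xs where a2: "a \<in> Zf n e (s - j * b)" "w \<in> Is n e" "set xs \<subseteq> IsoSet n e \<Lambda>"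
      "a = w + sum_list xs" using a by (auto simp: Bset_def)
    have "sum_list (map (phi n e) ys) = length ys * b"
      using ys(1) isoPhi by (intro sum_list_const) auto
    then have phc: "phi n e c = j * b" using ys by (simp add: phi_sum_list)
    have cV: "c \<in> vecs e" using ys Iso_sub Zf_sub by (metis vecs_sum_list subset_trans)
    have jb: "j * b \<le> s" using jq qle by (meson le_trans mult_le_mono1)
    have "v \<in> Zf n e s" using a2(1) cV phc jb unfolding vac Zf_def
      by (auto simp: phi_add intro: vecs_add)
    moreover have "v = w + sum_list (xs @ ys)" using vac a2(4) ys(3) by (simp add: add.assoc)
    moreover have "set (xs @ ys) \<subseteq> IsoSet n e (\<Lambda> \<union> {b})" using isoU a2(3) ys(1) by auto
    ultimately show "v \<in> Bset n e s (\<Lambda> \<union> {b})" using a2(2) unfolding Bset_def by blast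
  qed
  have "card (Bset n e s (\<Lambda> \<union> {b})) \<le>
      (\<Sum>j=0..q. card (mink (Bset n e (s - j * b) \<Lambda>) (mpow (Iso n e b) j)))"
    unfolding seteq by (rule card_UN_le) simp
  also have "\<dots> \<le> (\<Sum>j=0..q. card (Bset n e (s - j * b) \<Lambda>) * ((iso_num n e b + j - 1) choose j))"
  proof (rule sum_mono)
    fix j
    have "card (mink (Bset n e (s - j * b) \<Lambda>) (mpow (Iso n e b) j))
        \<le> card (Bset n e (s - j * b) \<Lambda>) * card (mpow (Iso n e b) j)" by (rule mink_card)
    also have "\<dots> \<le> card (Bset n e (s - j * b) \<Lambda>) * ((iso_num n e b + j - 1) choose j)"
      using mpow_card[of "Iso n e b" j] by (simp add: iso_num_def)
    finally show "card (mink (Bset n e (s - j * b) \<Lambda>) (mpow (Iso n e b) j))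
        \<le> card (Bset n e (s - j * b) \<Lambda>) * ((iso_num n e b + j - 1) choose j)" .
  qed
  finally show ?thesis using seteq by (simp add: q_def)
qed

end
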